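(* Let $g(t)$, $t\in[0,T)$, be the maximal Ricci flow solution on $S^1\times S^3$ of the form $g(t)=\phi^2dz^2+a^2\omega^1\otimes\omega^1+b^2\omega^2\otimes\omega^2+c^2\omega^3\otimes\omega^3$ starting from initial data with $0<a\le b\le c$, and let $\check a(t)=\min_{s}a(s,t)$. If there exists $T<\infty$ such that $\check a(T)=0$, then $\check a(t)^2\le 4(T-t)$.
   Context: $S^3=SU(2)$ carries a global left-invariant frame $E_1,E_2,E_3$ with $[E_i,E_j]=-2\epsilon_{ijk}E_k$ and dual coframe $\omega^i$; $z\in S^1=[0,2\pi)$, $\phi,a,b,c$ positive smooth $2\pi$-periodic functions of $z$ (and $t$); $s$ is the arclength coordinate $ds=\phi\,dz$. The Ricci flow $\partial_tg=-2\mathrm{Ric}(g)$ preserves this form. $\check a(T)$ denotes the limiting value of $\check a(t)$ as $t\to T$. *)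

theory Defs
  imports "HOL-Analysis.Analysis"
begin

fun Ck_on :: "nat \<Rightarrow> (real \<times> real) set \<Rightarrow> (real \<times> real \<Rightarrow> real) \<Rightarrow> bool" where
  "Ck_on 0 U F = continuous_on U F"
| "Ck_on (Suc n) U F =
     (continuous_on U F \<and>
      (\<exists>Fz Ft. (\<forall>p\<in>U. ((\<lambda>x. F (x, snd p)) has_real_derivative Fz p) (at (fst p)))
             \<and> (\<forall>p\<in>U. ((\<lambda>y. F (fst p, y)) has_real_derivative Ft p) (at (snd p)))
             \<and> Ck_on n U Fz \<and> Ck_on n U Ft))"

definition smooth_on2 :: "(real \<times> real) set \<Rightarrow> (real \<times> real \<Rightarrow> real) \<Rightarrow> bool" where
  "smooth_on2 U F \<longleftrightarrow> (\<forall>n. Ck_on n U F)"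

text \<open>f(z,t) is smooth on S^1 \<times> [0,T) (z \<in> \<real>, 2\<pi>-periodic): it agrees there with a function
  that is smooth on an open neighbourhood of \<real> \<times> [0,T).\<close>
definition smooth_upto :: "real \<Rightarrow> (real \<Rightarrow> real \<Rightarrow> real) \<Rightarrow> bool" where
  "smooth_upto T f \<longleftrightarrow>
     (\<exists>U G. open U \<and> UNIV \<times> {0..<T} \<subseteq> U \<and> smooth_on2 U G \<and>
            (\<forall>z t. 0 \<le> t \<longrightarrow> t < T \<longrightarrow> G (z, t) = f z t))"

text \<open>Arclength derivative d/ds = (1/\<phi>) d/dz, at fixed time.\<close>
definition sder :: "(real \<Rightarrow> real \<Rightarrow> real) \<Rightarrow> (real \<Rightarrow> real \<Rightarrow> real) \<Rightarrow> real \<Rightarrow> real \<Rightarrow> real" where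
  "sder \<phi> f = (\<lambda>z t. deriv (\<lambda>w. f w t) z / \<phi> z t)"

definition tder :: "(real \<Rightarrow> real \<Rightarrow> real) \<Rightarrow> real \<Rightarrow> real \<Rightarrow> real" where
  "tder f = (\<lambda>z t. deriv (\<lambda>\<tau>. f z \<tau>) t)"

text \<open>Ricci flow  \<partial>_t g = -2 Ric(g)  for
  g = \<phi>^2 dz^2 + a^2 \<omega>1\<otimes>\<omega>1 + b^2 \<omega>2\<otimes>\<omega>2 + c^2 \<omega>3\<otimes>\<omega>3  on S^1 \<times> S^3,
  with [E_i,E_j] = -2 \<epsilon>_ijk E_k, written out as the equivalent PDE system for \<phi>, a, b, c:
   Ric(\<partial>_s,\<partial>_s) = -(a_ss/a + b_ss/b + c_ss/c),
   Ric(e_1,e_1) = -a_ss/a - (a_s/a)(b_s/b + c_s/c) + 2(a^4 - (b^2-c^2)^2)/(a^2 b^2 c^2)  (and cyclically),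
   mixed components vanish.\<close>
definition ricci_flow_eqs ::
  "real \<Rightarrow> (real \<Rightarrow> real \<Rightarrow> real) \<Rightarrow> (real \<Rightarrow> real \<Rightarrow> real) \<Rightarrow> (real \<Rightarrow> real \<Rightarrow> real)
     \<Rightarrow> (real \<Rightarrow> real \<Rightarrow> real) \<Rightarrow> bool" where
  "ricci_flow_eqs T \<phi> a b c \<longleftrightarrow>
    (\<forall>z. \<forall>t\<in>{0<..<T}.
       tder \<phi> z t = \<phi> z t * (sder \<phi> (sder \<phi> a) z t / a z t + sder \<phi> (sder \<phi> b) z t / b z t
                                + sder \<phi> (sder \<phi> c) z t / c z t)
     \<and> tder a z t = sder \<phi> (sder \<phi> a) z t
          + sder \<phi> a z t * (sder \<phi> b z t / b z t + sder \<phi> c z t / c z t)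
          + 2 * ((b z t ^ 2 - c z t ^ 2) ^ 2 - a z t ^ 4) / (a z t * b z t ^ 2 * c z t ^ 2)
     \<and> tder b z t = sder \<phi> (sder \<phi> b) z t
          + sder \<phi> b z t * (sder \<phi> c z t / c z t + sder \<phi> a z t / a z t)
          + 2 * ((c z t ^ 2 - a z t ^ 2) ^ 2 - b z t ^ 4) / (b z t * c z t ^ 2 * a z t ^ 2)
     \<and> tder c z t = sder \<phi> (sder \<phi> c) z t
          + sder \<phi> c z t * (sder \<phi> a z t / a z t + sder \<phi> b z t / b z t)
          + 2 * ((a z t ^ 2 - b z t ^ 2) ^ 2 - c z t ^ 4) / (c z t * a z t ^ 2 * b z t ^ 2))"

definition RF_S1S3 ::
  "real \<Rightarrow> (real \<Rightarrow> real \<Rightarrow> real) \<Rightarrow> (real \<Rightarrow> real \<Rightarrow> real) \<Rightarrow> (real \<Rightarrow> real \<Rightarrow> real)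
     \<Rightarrow> (real \<Rightarrow> real \<Rightarrow> real) \<Rightarrow> bool" where
  "RF_S1S3 T \<phi> a b c \<longleftrightarrow>
    0 < T \<and>
    (\<forall>f\<in>{\<phi>, a, b, c}. smooth_upto T f \<and>
        (\<forall>z t. 0 \<le> t \<longrightarrow> t < T \<longrightarrow> 0 < f z t \<and> f (z + 2 * pi) t = f z t)) \<and>
    ricci_flow_eqs T \<phi> a b c"

definition maximal_RF_S1S3 ::
  "real \<Rightarrow> (real \<Rightarrow> real \<Rightarrow> real) \<Rightarrow> (real \<Rightarrow> real \<Rightarrow> real) \<Rightarrow> (real \<Rightarrow> real \<Rightarrow> real)
     \<Rightarrow> (real \<Rightarrow> real \<Rightarrow> real) \<Rightarrow> bool" where
  "maximal_RF_S1S3 T \<phi> a b c \<longleftrightarrow>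
    RF_S1S3 T \<phi> a b c \<and>
    \<not> (\<exists>T' \<phi>' a' b' c'. T < T' \<and> RF_S1S3 T' \<phi>' a' b' c' \<and>
         (\<forall>z t. 0 \<le> t \<longrightarrow> t < T \<longrightarrow>
            \<phi>' z t = \<phi> z t \<and> a' z t = a z t \<and> b' z t = b z t \<and> c' z t = c z t))"

end

theory Submission
  imports Defs
begin


lemma react_id:
  fixes X Y U :: real
  assumes "X > 0" "Y > 0" "U > 0"
  shows "2 * ((U^2 - X^2)^2 - Y^4) / (Y * U^2 * X^2) - 2 * ((Y^2 - U^2)^2 - X^4) / (X * Y^2 * U^2)
     = (Y - X) * (2 * (U^4 + 2*X*Y*U^2 - (X+Y)^2*(X^2+Y^2)) / (X^2*Y^2*U^2))"
  using assms by (simp add: field_simps) algebra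

lemma second_deriv_min:
  fixes f fd :: "real \<Rightarrow> real"
  assumes d1: "\<And>w. (f has_real_derivative fd w) (at w)"
    and d2: "(fd has_real_derivative fdd) (at z)"
    and mn: "\<And>w. f z \<le> f w"
  shows "fd z = 0 \<and> 0 \<le> fdd"
proof -
  have z0: "fd z = 0"
    using DERIV_local_min[OF d1[of z], of 1] mn by auto
  moreover have "0 \<le> fdd"
  proof (rule ccontr)
    assume "\<not> 0 \<le> fdd"
    then have "fdd < 0" by simp
    from DERIV_neg_dec_right[OF d2 this] obtain d where d: "d > 0"
      and lt: "\<forall>h>0. h < d \<longrightarrow> fd z > fd (z + h)" by blast
    have "\<exists>\<xi>>z. \<xi> < z + d/2 \<and> f (z + d/2) - f z = (z + d/2 - z) * fd \<xi>"
      by (rule MVT2) (use d d1 in auto)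
    then obtain \<xi> where xi: "\<xi> > z" "\<xi> < z + d/2" "f (z + d/2) - f z = (d/2) * fd \<xi>" by auto
    have "fd \<xi> < 0" using lt[rule_format, of "\<xi> - z"] xi d z0 by auto
    then have "(d/2) * fd \<xi> < 0" using d by (simp add: mult_pos_neg)
    then have "f (z + d/2) - f z < 0" using xi by linarith
    with mn[of "z + d/2"] show False by simp
  qed
  ultimately show ?thesis by simp
qed

lemma sder2_eq:
  fixes f \<phi> :: "real \<Rightarrow> real \<Rightarrow> real"
  assumes d1: "\<And>w. ((\<lambda>x. f x t) has_real_derivative fd w) (at w)"
    and d2: "(fd has_real_derivative fdd) (at z)"
    and dp: "((\<lambda>x. \<phi> x t) has_real_derivative pd) (at z)"
    and pz: "\<phi> z t \<noteq> 0"
  shows "sder \<phi> (sder \<phi> f) z t = (fdd * \<phi> z t - fd z * pd) / (\<phi> z t)^3"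
    and "sder \<phi> f z t = fd z / \<phi> z t"
proof -
  have e: "(\<lambda>w. sder \<phi> f w t) = (\<lambda>w. fd w / \<phi> w t)"
    unfolding sder_def using DERIV_imp_deriv[OF d1] by simp
  have "((\<lambda>w. fd w / \<phi> w t) has_real_derivative (fdd * \<phi> z t - fd z * pd) / (\<phi> z t * \<phi> z t)) (at z)"
    by (rule DERIV_divide[OF d2 dp pz])
  then have "deriv (\<lambda>w. sder \<phi> f w t) z = (fdd * \<phi> z t - fd z * pd) / (\<phi> z t * \<phi> z t)"
    using e DERIV_imp_deriv by simp
  then show "sder \<phi> (sder \<phi> f) z t = (fdd * \<phi> z t - fd z * pd) / (\<phi> z t)^3"
    using pz unfolding sder_def[of \<phi> "sder \<phi> f"] by (simp add: power3_eq_cube)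
  show "sder \<phi> f z t = fd z / \<phi> z t"
    using DERIV_imp_deriv[OF d1] unfolding sder_def by simp
qed



lemma reg:
  assumes "smooth_upto T f"
  obtains f1 f2 ft where
    "continuous_on (UNIV \<times> {0..<T}) (\<lambda>p. f (fst p) (snd p))"
    "continuous_on (UNIV \<times> {0..<T}) f1"
    "\<And>z t. 0 \<le> t \<Longrightarrow> t < T \<Longrightarrow> ((\<lambda>x. f x t) has_real_derivative f1 (z,t)) (at z)"
    "\<And>z t. 0 \<le> t \<Longrightarrow> t < T \<Longrightarrow> ((\<lambda>x. f1 (x,t)) has_real_derivative f2 (z,t)) (at z)"
    "\<And>z t. 0 < t \<Longrightarrow> t < T \<Longrightarrow> ((\<lambda>\<tau>. f z \<tau>) has_real_derivative ft (z,t)) (at t)"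
proof -
  obtain U G where U: "open U" "UNIV \<times> {0..<T} \<subseteq> U" "smooth_on2 U G"
    and G: "\<And>z t. 0 \<le> t \<Longrightarrow> t < T \<Longrightarrow> G (z, t) = f z t"
    using assms unfolding smooth_upto_def by blast
  have "Ck_on (Suc (Suc 0)) U G" using U(3) unfolding smooth_on2_def by blast
  then obtain Fz Ft where c0: "continuous_on U G"
    and dz: "\<forall>p\<in>U. ((\<lambda>x. G (x, snd p)) has_real_derivative Fz p) (at (fst p))"
    and dt: "\<forall>p\<in>U. ((\<lambda>y. G (fst p, y)) has_real_derivative Ft p) (at (snd p))"
    and c1: "Ck_on (Suc 0) U Fz" by auto
  then obtain Fzz where c1': "continuous_on U Fz"
    and dzz: "\<forall>p\<in>U. ((\<lambda>x. Fz (x, snd p)) has_real_derivative Fzz p) (at (fst p))"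
    by auto
  show ?thesis
  proof
    show "continuous_on (UNIV \<times> {0..<T}) (\<lambda>p. f (fst p) (snd p))"
      using continuous_on_subset[OF c0 U(2)]
      by (rule continuous_on_cong[THEN iffD1, rotated -1]) (auto simp: G)
    show "continuous_on (UNIV \<times> {0..<T}) Fz"
      using continuous_on_subset[OF c1' U(2)] .
  next
    fix z t :: real assume "0 \<le> t" "t < T"
    then have inU: "(z,t) \<in> U" using U(2) by auto
    have e: "(\<lambda>x. G (x, t)) = (\<lambda>x. f x t)" using G \<open>0 \<le> t\<close> \<open>t < T\<close> by auto
    show "((\<lambda>x. f x t) has_real_derivative Fz (z,t)) (at z)"
      using dz inU e by force
    show "((\<lambda>x. Fz (x,t)) has_real_derivative Fzz (z,t)) (at z)"
      using dzz inU by force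
  next
    fix z t :: real assume "0 < t" "t < T"
    then have inU: "(z,t) \<in> U" using U(2) by auto
    have "((\<lambda>y. G (z, y)) has_real_derivative Ft (z,t)) (at t)" using dt inU by force
    then show "((\<lambda>\<tau>. f z \<tau>) has_real_derivative Ft (z,t)) (at t)"
      by (rule has_field_derivative_transform_within_open[where S="{0<..<T}"])
         (use \<open>0 < t\<close> \<open>t < T\<close> G in auto)
  qed
qed

lemma periodic_int:
  fixes g :: "real \<Rightarrow> real"
  assumes "\<And>z. g (z + 2*pi) = g z"
  shows "g (z + of_int n * (2*pi)) = g z"
proof -
  have nat: "g (z + real m * (2*pi)) = g z" for z m
  proof (induction m arbitrary: z)
    case 0 then show ?case by simp
  next
    case (Suc m)
    have "g (z + real (Suc m) * (2*pi)) = g ((z + real m * (2*pi)) + 2*pi)"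
      by (simp add: algebra_simps)
    also have "\<dots> = g z" using assms Suc by simp
    finally show ?case .
  qed
  show ?thesis
  proof (cases "n \<ge> 0")
    case True
    then show ?thesis using nat[of z "nat n"] by simp
  next
    case False
    then have "g ((z + of_int n * (2*pi)) + real (nat (-n)) * (2*pi)) = g (z + of_int n * (2*pi))"
      using nat by blast
    moreover have "(z + of_int n * (2*pi)) + real (nat (-n)) * (2*pi) = z" using False
      by (simp add: algebra_simps)
    ultimately show ?thesis by simp
  qed
qed

lemma periodic_reduce:
  fixes g :: "real \<Rightarrow> real"
  assumes "\<And>z. g (z + 2*pi) = g z"
  shows "\<exists>z'\<in>{0..2*pi}. g z' = g z"
proof -
  define n where "n = \<lfloor>z / (2*pi)\<rfloor>"
  define z' where "z' = z + of_int (-n) * (2*pi)"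
  have "of_int n \<le> z / (2*pi)" "z / (2*pi) < of_int n + 1" unfolding n_def by linarith+
  then have "of_int n * (2*pi) \<le> z" "z < (of_int n + 1) * (2*pi)"
    using pi_gt_zero by (simp_all add: field_simps)
  then have "z' \<in> {0..2*pi}" unfolding z'_def by (auto simp: algebra_simps)
  moreover have "g z' = g z" unfolding z'_def by (rule periodic_int[of g, OF assms])
  ultimately show ?thesis by blast
qed



lemma first_touch:
  fixes v :: "real \<Rightarrow> real \<Rightarrow> real" and ta tb :: real
  assumes cont: "continuous_on ({0..2*pi} \<times> {ta..tb}) (\<lambda>p. v (fst p) (snd p))"
    and per: "\<And>z t. ta \<le> t \<Longrightarrow> t \<le> tb \<Longrightarrow> v (z + 2*pi) t = v z t"
    and init: "\<And>z. v z ta > 0"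
    and tc: "\<And>z t. ta < t \<Longrightarrow> t \<le> tb \<Longrightarrow> isCont (\<lambda>\<tau>. v z \<tau>) t"
    and neg: "v za sa \<le> 0" "ta \<le> sa" "sa \<le> tb"
  obtains zs ts where "zs \<in> {0..2*pi}" "ta < ts" "ts \<le> tb" "v zs ts = 0" "\<And>z. v z ts \<ge> 0"
    "\<And>z \<tau>. ta \<le> \<tau> \<Longrightarrow> \<tau> < ts \<Longrightarrow> v z \<tau> > 0"
proof -
  define B where "B = {0..2*pi} \<times> {ta..tb}"
  define S where "S = {p \<in> B. v (fst p) (snd p) \<le> 0}"
  have "closed S" unfolding S_def
    by (rule continuous_on_closed_Collect_le) (use cont in \<open>auto simp: B_def intro: closed_Times\<close>)
  moreover have "bounded S" unfolding S_def B_def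
    by (rule bounded_subset[of "{0..2*pi} \<times> {ta..tb}"]) (auto intro: bounded_Times)
  ultimately have cS: "compact S" by (simp add: compact_eq_bounded_closed)
  have red: "\<exists>z'\<in>{0..2*pi}. v z' t = v z t" if "ta \<le> t" "t \<le> tb" for z t
    by (rule periodic_reduce[of "\<lambda>z. v z t"]) (use per that in auto)
  obtain za' where "za' \<in> {0..2*pi}" "v za' sa = v za sa" using red neg by blast
  then have "(za', sa) \<in> S" using neg unfolding S_def B_def by auto
  then have "S \<noteq> {}" by auto
  from continuous_attains_inf[OF cS this continuous_on_snd[OF continuous_on_id]]
  obtain p where pS: "p \<in> S" and pmin: "\<And>q. q \<in> S \<Longrightarrow> snd p \<le> snd q" by auto
  obtain zs ts where p: "p = (zs, ts)" by (cases p)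
  have zs: "zs \<in> {0..2*pi}" "ta \<le> ts" "ts \<le> tb" "v zs ts \<le> 0" using pS p unfolding S_def B_def by auto
  have "ts \<noteq> ta" using zs(4) init[of zs] by auto
  then have tgt: "ta < ts" using zs by auto
  have pos: "v z \<tau> > 0" if tt: "ta \<le> \<tau>" "\<tau> < ts" for z \<tau>
  proof (rule ccontr)
    assume "\<not> v z \<tau> > 0"
    moreover obtain z' where "z' \<in> {0..2*pi}" "v z' \<tau> = v z \<tau>" using red[of \<tau> z] tt zs by auto
    ultimately have "(z', \<tau>) \<in> S" using tt zs unfolding S_def B_def by auto
    from pmin[OF this] p tt show False by auto
  qed
  have nn: "v z ts \<ge> 0" for z
  proof (rule ccontr)
    assume "\<not> v z ts \<ge> 0"
    then have e: "- v z ts > 0" by simp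
    from tc[OF tgt zs(3), of z] obtain d where d: "d > 0"
      and dd: "\<And>y. dist y ts < d \<Longrightarrow> dist (v z y) (v z ts) < - v z ts"
      unfolding continuous_at_eps_delta using e by blast
    define \<tau> where "\<tau> = max ta (ts - d/2)"
    have "ta \<le> \<tau>" "\<tau> < ts" "dist \<tau> ts < d" using d tgt unfolding \<tau>_def dist_real_def by auto
    then have "v z \<tau> > 0" "dist (v z \<tau>) (v z ts) < - v z ts" using pos dd by auto
    then show False unfolding dist_real_def by auto
  qed
  show ?thesis
  proof
    show "zs \<in> {0..2*pi}" by (fact zs(1))
    show "ta < ts" "ts \<le> tb" by (fact tgt) (fact zs(3))
    show "v zs ts = 0" using nn[of zs] zs(4) by simp
    show "\<And>z. v z ts \<ge> 0" by (fact nn)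
    show "\<And>z \<tau>. ta \<le> \<tau> \<Longrightarrow> \<tau> < ts \<Longrightarrow> v z \<tau> > 0" by (fact pos)
  qed
qed

lemma deriv_nonpos_at_touch:
  fixes g :: "real \<Rightarrow> real"
  assumes "(g has_real_derivative D) (at ts)" "ta < ts" "g ts = 0"
    "\<And>\<tau>. ta \<le> \<tau> \<Longrightarrow> \<tau> < ts \<Longrightarrow> g \<tau> > 0"
  shows "D \<le> 0"
proof (rule ccontr)
  assume "\<not> D \<le> 0"
  then have "D > 0" by simp
  from DERIV_pos_inc_left[OF assms(1) this] obtain d where d: "d > 0"
    and lt: "\<forall>h>0. h < d \<longrightarrow> g (ts - h) < g ts" by blast
  define h where "h = min (d/2) (ts - ta)"
  have "h > 0" "h < d" "ta \<le> ts - h" "ts - h < ts" using d assms(2) unfolding h_def by auto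
  then show False using lt assms(3) assms(4)[of "ts - h"] by auto
qed



lemma alg1:
  fixes P X Y U q p1 u1 x2 y2 :: real
  assumes "P > 0" "X > 0" "Y > 0" "U > 0"
  shows "((y2*P - q*p1)/P^3 + q/P*((u1/P)/U + (q/P)/X)
           + 2 * ((U^2 - X^2)^2 - Y^4) / (Y * U^2 * X^2))
       - ((x2*P - q*p1)/P^3 + q/P*((q/P)/Y + (u1/P)/U)
           + 2 * ((Y^2 - U^2)^2 - X^4) / (X * Y^2 * U^2))
     = (y2 - x2)/P^2 + (Y - X) * ((q/P)^2/(X*Y)
           + 2 * (U^4 + 2*X*Y*U^2 - (X+Y)^2*(X^2+Y^2)) / (X^2*Y^2*U^2))"
proof -
  have r: "2 * ((U^2 - X^2)^2 - Y^4) / (Y * U^2 * X^2) - 2 * ((Y^2 - U^2)^2 - X^4) / (X * Y^2 * U^2)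
     = (Y - X) * (2 * (U^4 + 2*X*Y*U^2 - (X+Y)^2*(X^2+Y^2)) / (X^2*Y^2*U^2))"
    using react_id assms by blast
  have s: "(y2*P - q*p1)/P^3 + q/P*((u1/P)/U + (q/P)/X) - ((x2*P - q*p1)/P^3 + q/P*((q/P)/Y + (u1/P)/U))
     = (y2 - x2)/P^2 + (Y - X) * ((q/P)^2/(X*Y))"
    using assms by (simp add: field_simps power2_eq_square power3_eq_cube)
  show ?thesis using r s by (simp add: algebra_simps)
qed



lemma order_pres:
  fixes T :: real and \<phi> x y u :: "real \<Rightarrow> real \<Rightarrow> real"
  assumes sm: "smooth_upto T \<phi>" "smooth_upto T x" "smooth_upto T y" "smooth_upto T u"
    and pos: "\<And>z t. 0 \<le> t \<Longrightarrow> t < T \<Longrightarrow> 0 < \<phi> z t \<and> 0 < x z t \<and> 0 < y z t \<and> 0 < u z t"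
    and per: "\<And>z t. 0 \<le> t \<Longrightarrow> t < T \<Longrightarrow> x (z + 2*pi) t = x z t \<and> y (z + 2*pi) t = y z t"
    and ex: "\<And>z t. 0 < t \<Longrightarrow> t < T \<Longrightarrow> tder x z t = sder \<phi> (sder \<phi> x) z t
          + sder \<phi> x z t * (sder \<phi> y z t / y z t + sder \<phi> u z t / u z t)
          + 2 * ((y z t ^ 2 - u z t ^ 2) ^ 2 - x z t ^ 4) / (x z t * y z t ^ 2 * u z t ^ 2)"
    and ey: "\<And>z t. 0 < t \<Longrightarrow> t < T \<Longrightarrow> tder y z t = sder \<phi> (sder \<phi> y) z t
          + sder \<phi> y z t * (sder \<phi> u z t / u z t + sder \<phi> x z t / x z t)
          + 2 * ((u z t ^ 2 - x z t ^ 2) ^ 2 - y z t ^ 4) / (y z t * u z t ^ 2 * x z t ^ 2)"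
    and init: "\<And>z. x z 0 \<le> y z 0"
    and t: "0 \<le> s1" "s1 < T"
  shows "x z1 s1 \<le> y z1 s1"
proof (rule ccontr)
  assume "\<not> x z1 s1 \<le> y z1 s1"
  then have dpos: "x z1 s1 - y z1 s1 > 0" by simp
  obtain p1 p2 pt where P: "continuous_on (UNIV \<times> {0..<T}) (\<lambda>p. \<phi> (fst p) (snd p))"
    "continuous_on (UNIV \<times> {0..<T}) p1"
    "\<And>z t. 0 \<le> t \<Longrightarrow> t < T \<Longrightarrow> ((\<lambda>w. \<phi> w t) has_real_derivative p1 (z,t)) (at z)"
    "\<And>z t. 0 \<le> t \<Longrightarrow> t < T \<Longrightarrow> ((\<lambda>w. p1 (w,t)) has_real_derivative p2 (z,t)) (at z)"
    "\<And>z t. 0 < t \<Longrightarrow> t < T \<Longrightarrow> ((\<lambda>\<tau>. \<phi> z \<tau>) has_real_derivative pt (z,t)) (at t)"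
    using reg[OF sm(1)] by blast
  obtain x1 x2 xt where X: "continuous_on (UNIV \<times> {0..<T}) (\<lambda>p. x (fst p) (snd p))"
    "continuous_on (UNIV \<times> {0..<T}) x1"
    "\<And>z t. 0 \<le> t \<Longrightarrow> t < T \<Longrightarrow> ((\<lambda>w. x w t) has_real_derivative x1 (z,t)) (at z)"
    "\<And>z t. 0 \<le> t \<Longrightarrow> t < T \<Longrightarrow> ((\<lambda>w. x1 (w,t)) has_real_derivative x2 (z,t)) (at z)"
    "\<And>z t. 0 < t \<Longrightarrow> t < T \<Longrightarrow> ((\<lambda>\<tau>. x z \<tau>) has_real_derivative xt (z,t)) (at t)"
    using reg[OF sm(2)] by blast
  obtain y1 y2 yt where Y: "continuous_on (UNIV \<times> {0..<T}) (\<lambda>p. y (fst p) (snd p))"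
    "continuous_on (UNIV \<times> {0..<T}) y1"
    "\<And>z t. 0 \<le> t \<Longrightarrow> t < T \<Longrightarrow> ((\<lambda>w. y w t) has_real_derivative y1 (z,t)) (at z)"
    "\<And>z t. 0 \<le> t \<Longrightarrow> t < T \<Longrightarrow> ((\<lambda>w. y1 (w,t)) has_real_derivative y2 (z,t)) (at z)"
    "\<And>z t. 0 < t \<Longrightarrow> t < T \<Longrightarrow> ((\<lambda>\<tau>. y z \<tau>) has_real_derivative yt (z,t)) (at t)"
    using reg[OF sm(3)] by blast
  obtain u1 u2 ut where UU: "continuous_on (UNIV \<times> {0..<T}) (\<lambda>p. u (fst p) (snd p))"
    "continuous_on (UNIV \<times> {0..<T}) u1"
    "\<And>z t. 0 \<le> t \<Longrightarrow> t < T \<Longrightarrow> ((\<lambda>w. u w t) has_real_derivative u1 (z,t)) (at z)"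
    "\<And>z t. 0 \<le> t \<Longrightarrow> t < T \<Longrightarrow> ((\<lambda>w. u1 (w,t)) has_real_derivative u2 (z,t)) (at z)"
    "\<And>z t. 0 < t \<Longrightarrow> t < T \<Longrightarrow> ((\<lambda>\<tau>. u z \<tau>) has_real_derivative ut (z,t)) (at t)"
    using reg[OF sm(4)] by blast
  define Bx where "Bx = {0..2*pi} \<times> {0..s1}"
  have sub: "Bx \<subseteq> UNIV \<times> {0..<T}" unfolding Bx_def using t by auto
  have cB: "compact Bx" unfolding Bx_def by (intro compact_Times compact_Icc)
  have posB: "0 < \<phi> (fst p) (snd p) \<and> 0 < x (fst p) (snd p) \<and> 0 < y (fst p) (snd p) \<and> 0 < u (fst p) (snd p)"
    if "p \<in> Bx" for p
  proof -
    have "0 \<le> snd p" "snd p < T" using that t unfolding Bx_def by auto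
    then show ?thesis using pos by blast
  qed
  define K where "K = (\<lambda>p. (x1 p / \<phi> (fst p) (snd p))^2 / (x (fst p) (snd p) * y (fst p) (snd p))
     + 2 * (u (fst p) (snd p)^4 + 2 * x (fst p) (snd p) * y (fst p) (snd p) * u (fst p) (snd p)^2
        - (x (fst p) (snd p) + y (fst p) (snd p))^2 * (x (fst p) (snd p)^2 + y (fst p) (snd p)^2))
       / (x (fst p) (snd p)^2 * y (fst p) (snd p)^2 * u (fst p) (snd p)^2))"
  have cP: "continuous_on Bx (\<lambda>p. \<phi> (fst p) (snd p))" using continuous_on_subset[OF P(1) sub] .
  have cX: "continuous_on Bx (\<lambda>p. x (fst p) (snd p))" using continuous_on_subset[OF X(1) sub] .
  have cX1: "continuous_on Bx x1" using continuous_on_subset[OF X(2) sub] .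
  have cY: "continuous_on Bx (\<lambda>p. y (fst p) (snd p))" using continuous_on_subset[OF Y(1) sub] .
  have cU: "continuous_on Bx (\<lambda>p. u (fst p) (snd p))" using continuous_on_subset[OF UU(1) sub] .
  have cK: "continuous_on Bx K" unfolding K_def
    by (intro continuous_intros cP cX cX1 cY cU) (auto dest!: posB)
  have "bounded (K ` Bx)" by (rule compact_imp_bounded[OF compact_continuous_image[OF cK cB]])
  then obtain L0 where L0: "\<And>p. p \<in> Bx \<Longrightarrow> \<bar>K p\<bar> \<le> L0" unfolding bounded_real by auto
  define L where "L = max 1 L0"
  have Lpos: "L > 0" and KL: "\<And>p. p \<in> Bx \<Longrightarrow> K p \<le> L"
    unfolding L_def by (simp, metis L0 abs_ge_self max.coboundedI2 order_trans)
  define \<delta> where "\<delta> = x z1 s1 - y z1 s1"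
  define \<epsilon> where "\<epsilon> = \<delta> / (2 * exp (2 * L * s1))"
  have epos: "\<epsilon> > 0" unfolding \<epsilon>_def \<delta>_def using dpos by simp
  define v where "v = (\<lambda>z t. y z t - x z t + \<epsilon> * exp (2 * L * t))"
  have vder: "((\<lambda>\<tau>. v z \<tau>) has_real_derivative (yt (z,t) - xt (z,t) + \<epsilon> * (exp (2 * L * t) * (2 * L)))) (at t)"
    if "0 < t" "t < T" for z t
  proof -
    have "((\<lambda>\<tau>. exp (2 * L * \<tau>)) has_real_derivative exp (2 * L * t) * (2 * L)) (at t)"
      by (auto intro!: derivative_eq_intros)
    from DERIV_add[OF DERIV_diff[OF Y(5)[OF that] X(5)[OF that]] DERIV_cmult[OF this, of \<epsilon>]]
    show ?thesis unfolding v_def by simp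
  qed
  obtain zs ts where zsB: "zs \<in> {0..2*pi}" and ts: "0 < ts" "ts \<le> s1" "v zs ts = 0" "\<And>z. v z ts \<ge> 0"
    "\<And>z \<tau>. 0 \<le> \<tau> \<Longrightarrow> \<tau> < ts \<Longrightarrow> v z \<tau> > 0"
  proof (rule first_touch[where v=v and ta=0 and tb=s1 and za=z1 and sa=s1])
    show "continuous_on ({0..2*pi} \<times> {0..s1}) (\<lambda>p. v (fst p) (snd p))"
      unfolding v_def using cX cY unfolding Bx_def by (intro continuous_intros) auto
    show "\<And>z t. 0 \<le> t \<Longrightarrow> t \<le> s1 \<Longrightarrow> v (z + 2*pi) t = v z t"
      unfolding v_def using per t by auto
    show "\<And>z. v z 0 > 0" unfolding v_def using init epos by (simp add: add_nonneg_pos)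
    show "\<And>z t. 0 < t \<Longrightarrow> t \<le> s1 \<Longrightarrow> isCont (\<lambda>\<tau>. v z \<tau>) t"
      using vder t by (meson DERIV_isCont order_le_less_trans)
    have "\<epsilon> * exp (2 * L * s1) = \<delta> / 2" unfolding \<epsilon>_def by simp
    then show "v z1 s1 \<le> 0" unfolding v_def \<delta>_def using dpos by simp
  qed (use t in auto)
  have tsT: "ts < T" using ts t by auto
  have inB: "(zs, ts) \<in> Bx" using zsB ts unfolding Bx_def by auto
  have ts0: "0 \<le> ts" using ts by simp
  define f where "f = (\<lambda>z. y z ts - x z ts)"
  have fmin: "f zs \<le> f w" for w
    using ts(3) ts(4)[of w] unfolding f_def v_def by simp
  have d1: "(f has_real_derivative y1 (w,ts) - x1 (w,ts)) (at w)" for w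
    unfolding f_def by (rule DERIV_diff[OF Y(3)[OF ts0 tsT] X(3)[OF ts0 tsT]])
  have d2: "((\<lambda>w. y1 (w,ts) - x1 (w,ts)) has_real_derivative y2 (zs,ts) - x2 (zs,ts)) (at zs)"
    by (rule DERIV_diff[OF Y(4)[OF ts0 tsT] X(4)[OF ts0 tsT]])
  have sd: "y1 (zs,ts) - x1 (zs,ts) = 0 \<and> 0 \<le> y2 (zs,ts) - x2 (zs,ts)"
    using second_deriv_min[where fd="\<lambda>w. y1 (w,ts) - x1 (w,ts)", OF d1 d2 fmin] by simp
  define Pv where "Pv = \<phi> zs ts"
  define Xv where "Xv = x zs ts"
  define Yv where "Yv = y zs ts"
  define Uv where "Uv = u zs ts"
  define q where "q = x1 (zs,ts)"
  have pv: "Pv > 0" "Xv > 0" "Yv > 0" "Uv > 0" using posB[OF inB] unfolding Pv_def Xv_def Yv_def Uv_def by auto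
  have yq: "y1 (zs,ts) = q" using sd unfolding q_def by simp
  note sx = sder2_eq[where f=x and t=ts and z=zs and \<phi>=\<phi> and fd="\<lambda>w. x1 (w,ts)", OF X(3)[OF ts0 tsT] X(4)[OF ts0 tsT] P(3)[OF ts0 tsT]]
  note sy = sder2_eq[where f=y and t=ts and z=zs and \<phi>=\<phi> and fd="\<lambda>w. y1 (w,ts)", OF Y(3)[OF ts0 tsT] Y(4)[OF ts0 tsT] P(3)[OF ts0 tsT]]
  note su = sder2_eq[where f=u and t=ts and z=zs and \<phi>=\<phi> and fd="\<lambda>w. u1 (w,ts)", OF UU(3)[OF ts0 tsT] UU(4)[OF ts0 tsT] P(3)[OF ts0 tsT]]
  have tx: "tder x zs ts = xt (zs,ts)" unfolding tder_def using DERIV_imp_deriv[OF X(5)[OF ts(1) tsT]] by simp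
  have ty: "tder y zs ts = yt (zs,ts)" unfolding tder_def using DERIV_imp_deriv[OF Y(5)[OF ts(1) tsT]] by simp
  have ne: "\<phi> zs ts \<noteq> 0" using pv unfolding Pv_def by simp
  have "yt (zs,ts) - xt (zs,ts) =
     ((y2 (zs,ts)*Pv - q*p1 (zs,ts))/Pv^3 + q/Pv*((u1 (zs,ts)/Pv)/Uv + (q/Pv)/Xv)
           + 2 * ((Uv^2 - Xv^2)^2 - Yv^4) / (Yv * Uv^2 * Xv^2))
       - ((x2 (zs,ts)*Pv - q*p1 (zs,ts))/Pv^3 + q/Pv*((q/Pv)/Yv + (u1 (zs,ts)/Pv)/Uv)
           + 2 * ((Yv^2 - Uv^2)^2 - Xv^4) / (Xv * Yv^2 * Uv^2))"
    using ex[OF ts(1) tsT, of zs] ey[OF ts(1) tsT, of zs] tx ty sx[OF ne] sy[OF ne] su[OF ne] yq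
    unfolding Pv_def Xv_def Yv_def Uv_def q_def by simp
  also have "\<dots> = (y2 (zs,ts) - x2 (zs,ts))/Pv^2 + (Yv - Xv) * K (zs,ts)"
    unfolding alg1[OF pv] by (simp add: K_def Pv_def Xv_def Yv_def Uv_def q_def)
  finally have eqn: "yt (zs,ts) - xt (zs,ts) = (y2 (zs,ts) - x2 (zs,ts))/Pv^2 + (Yv - Xv) * K (zs,ts)" .
  define E where "E = exp (2 * L * ts)"
  have Epos: "E > 0" unfolding E_def by simp
  have yx: "Yv - Xv = - (\<epsilon> * E)" using ts(3) unfolding v_def Yv_def Xv_def E_def by simp
  have "(Yv - Xv) * L \<le> (Yv - Xv) * K (zs,ts)"
    by (rule mult_left_mono_neg[OF KL[OF inB]]) (use yx epos Epos in simp)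
  moreover have "0 \<le> (y2 (zs,ts) - x2 (zs,ts))/Pv^2" using sd by simp
  moreover have "(Yv - Xv) * L = - (\<epsilon> * E) * L" using yx by simp
  ultimately have low: "yt (zs,ts) - xt (zs,ts) \<ge> - (\<epsilon> * E) * L" using eqn by linarith
  have "yt (zs,ts) - xt (zs,ts) + \<epsilon> * (exp (2 * L * ts) * (2 * L)) \<le> 0"
    by (rule deriv_nonpos_at_touch[OF vder[OF ts(1) tsT] ts(1) ts(3)]) (use ts(5) in auto)
  moreover have "\<epsilon> * E * L > 0" using epos Epos Lpos by simp
  ultimately show False using low unfolding E_def by (simp add: algebra_simps)
qed



lemma react_low:
  fixes A B C :: real
  assumes "0 < A" "A \<le> B" "B \<le> C"
  shows "2 * ((B^2 - C^2)^2 - A^4) / (A * B^2 * C^2) \<ge> - 2 / A"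
proof -
  have "A^2 \<le> B^2" "A^2 \<le> C^2" using assms by (auto intro: power_mono)
  then have "A^2 * A^2 \<le> B^2 * C^2" by (intro mult_mono) auto
  then have h: "A^4 \<le> B^2 * C^2" by (simp add: power_def)
  have pos: "A * B^2 * C^2 > 0" using assms by simp
  have "- 2 / A = 2 * (- (B^2 * C^2)) / (A * B^2 * C^2)" using assms by (simp add: field_simps power2_eq_square)
  also have "\<dots> \<le> 2 * ((B^2 - C^2)^2 - A^4) / (A * B^2 * C^2)"
  proof (rule divide_right_mono)
    have "0 \<le> (B^2 - C^2)^2" by simp
    then show "2 * - (B^2 * C^2) \<le> 2 * ((B^2 - C^2)^2 - A ^ 4)" using h by (smt (verit))
    show "0 \<le> A * B^2 * C^2" using pos by linarith
  qed
  finally show ?thesis .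
qed

theorem lemma4p1:
  fixes T :: real and \<phi> a b c :: "real \<Rightarrow> real \<Rightarrow> real"
  assumes "maximal_RF_S1S3 T \<phi> a b c"
    and "\<forall>z. a z 0 \<le> b z 0 \<and> b z 0 \<le> c z 0"
    and "((\<lambda>t. INF z. a z t) \<longlongrightarrow> 0) (at_left T)"
  shows "\<forall>t\<in>{0..<T}. (INF z. a z t) ^ 2 \<le> 4 * (T - t)"
proof -
  have RF: "RF_S1S3 T \<phi> a b c" using assms(1) unfolding maximal_RF_S1S3_def by blast
  have Tpos: "0 < T" using RF unfolding RF_S1S3_def by blast
  have sm: "smooth_upto T \<phi>" "smooth_upto T a" "smooth_upto T b" "smooth_upto T c"
    using RF unfolding RF_S1S3_def by auto
  have posper: "\<And>f. f \<in> {\<phi>, a, b, c} \<Longrightarrow> (\<forall>z t. 0 \<le> t \<longrightarrow> t < T \<longrightarrow> 0 < f z t \<and> f (z + 2 * pi) t = f z t)"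
    using RF unfolding RF_S1S3_def by blast
  have pos: "\<And>z t. 0 \<le> t \<Longrightarrow> t < T \<Longrightarrow> 0 < \<phi> z t \<and> 0 < a z t \<and> 0 < b z t \<and> 0 < c z t"
    using posper by simp
  have per: "\<And>z t. 0 \<le> t \<Longrightarrow> t < T \<Longrightarrow> a (z + 2*pi) t = a z t \<and> b (z + 2*pi) t = b z t \<and> c (z + 2*pi) t = c z t"
    using posper by simp
  have eqs: "ricci_flow_eqs T \<phi> a b c" using RF unfolding RF_S1S3_def by blast
  note E = eqs[unfolded ricci_flow_eqs_def, rule_format]
  have ab: "a z t \<le> b z t" if "0 \<le> t" "t < T" for z t
    by (rule order_pres[where \<phi>=\<phi> and x=a and y=b and u=c and T=T])
       (use sm pos per E assms(2) that in \<open>auto\<close>)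
  have bc: "b z t \<le> c z t" if "0 \<le> t" "t < T" for z t
    by (rule order_pres[where \<phi>=\<phi> and x=b and y=c and u=a and T=T])
       (use sm pos per E assms(2) that in \<open>auto\<close>)
  obtain p1 p2 pt where P: "continuous_on (UNIV \<times> {0..<T}) (\<lambda>p. \<phi> (fst p) (snd p))"
    "continuous_on (UNIV \<times> {0..<T}) p1"
    "\<And>z t. 0 \<le> t \<Longrightarrow> t < T \<Longrightarrow> ((\<lambda>w. \<phi> w t) has_real_derivative p1 (z,t)) (at z)"
    "\<And>z t. 0 \<le> t \<Longrightarrow> t < T \<Longrightarrow> ((\<lambda>w. p1 (w,t)) has_real_derivative p2 (z,t)) (at z)"
    "\<And>z t. 0 < t \<Longrightarrow> t < T \<Longrightarrow> ((\<lambda>\<tau>. \<phi> z \<tau>) has_real_derivative pt (z,t)) (at t)"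
    using reg[OF sm(1)] by blast
  obtain a1 a2 aT where A: "continuous_on (UNIV \<times> {0..<T}) (\<lambda>p. a (fst p) (snd p))"
    "continuous_on (UNIV \<times> {0..<T}) a1"
    "\<And>z t. 0 \<le> t \<Longrightarrow> t < T \<Longrightarrow> ((\<lambda>w. a w t) has_real_derivative a1 (z,t)) (at z)"
    "\<And>z t. 0 \<le> t \<Longrightarrow> t < T \<Longrightarrow> ((\<lambda>w. a1 (w,t)) has_real_derivative a2 (z,t)) (at z)"
    "\<And>z t. 0 < t \<Longrightarrow> t < T \<Longrightarrow> ((\<lambda>\<tau>. a z \<tau>) has_real_derivative aT (z,t)) (at t)"
    using reg[OF sm(2)] by blast
  have main: "m0^2 - 4 * (s1 - t0) \<le> a z1 s1 ^ 2"
    if t0: "0 \<le> t0" "t0 \<le> s1" "s1 < T" and m0: "0 \<le> m0" "\<And>z. m0 \<le> a z t0" for t0 s1 m0 z1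
  proof (rule ccontr)
    assume "\<not> ?thesis"
    then have dpos: "m0^2 - 4 * (s1 - t0) - a z1 s1 ^ 2 > 0" by simp
    define \<delta> where "\<delta> = m0^2 - 4 * (s1 - t0) - a z1 s1 ^ 2"
    define \<epsilon> where "\<epsilon> = \<delta> / (2 * (1 + s1 - t0))"
    have epos: "\<epsilon> > 0" unfolding \<epsilon>_def \<delta>_def using dpos t0 by simp
    define v where "v = (\<lambda>z s. a z s ^ 2 - m0^2 + (4 + \<epsilon>) * (s - t0) + \<epsilon>)"
    have vder: "((\<lambda>\<tau>. v z \<tau>) has_real_derivative (2 * a z t * aT (z,t) + (4 + \<epsilon>))) (at t)"
      if "0 < t" "t < T" for z t
    proof -
      have "((\<lambda>\<tau>. a z \<tau> ^ 2) has_real_derivative of_nat 2 * (aT (z,t) * a z t ^ (2 - Suc 0))) (at t)"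
        by (rule DERIV_power[OF A(5)[OF that]])
      moreover have "((\<lambda>\<tau>. (4 + \<epsilon>) * (\<tau> - t0)) has_real_derivative (4 + \<epsilon>)) (at t)"
        by (auto intro!: derivative_eq_intros)
      ultimately have D: "((\<lambda>\<tau>. a z \<tau> ^ 2 - m0^2 + (4 + \<epsilon>) * (\<tau> - t0) + \<epsilon>) has_real_derivative
          (of_nat 2 * (aT (z,t) * a z t ^ (2 - Suc 0)) - 0 + (4 + \<epsilon>) + 0)) (at t)"
        by (intro DERIV_add DERIV_diff DERIV_const)
      have "of_nat 2 * (aT (z,t) * a z t ^ (2 - Suc 0)) - 0 + (4 + \<epsilon>) + 0 = 2 * a z t * aT (z,t) + (4 + \<epsilon>)"
        by simp
      from DERIV_cong[OF D this] show ?thesis unfolding v_def .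
    qed
    have sub: "{0..2*pi} \<times> {t0..s1} \<subseteq> UNIV \<times> {0..<T}" using t0 by auto
    obtain zs ts where zsB: "zs \<in> {0..2*pi}" and ts: "t0 < ts" "ts \<le> s1" "v zs ts = 0" "\<And>z. v z ts \<ge> 0"
      "\<And>z \<tau>. t0 \<le> \<tau> \<Longrightarrow> \<tau> < ts \<Longrightarrow> v z \<tau> > 0"
    proof (rule first_touch[where v=v and ta=t0 and tb=s1 and za=z1 and sa=s1])
      show "continuous_on ({0..2*pi} \<times> {t0..s1}) (\<lambda>p. v (fst p) (snd p))"
        unfolding v_def using continuous_on_subset[OF A(1) sub] by (intro continuous_intros) auto
      show "\<And>z t. t0 \<le> t \<Longrightarrow> t \<le> s1 \<Longrightarrow> v (z + 2*pi) t = v z t"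
        unfolding v_def using per t0 by auto
      show "v z t0 > 0" for z
      proof -
        have "m0^2 \<le> a z t0 ^ 2" using m0 by (intro power_mono) auto
        then show ?thesis unfolding v_def using epos by simp
      qed
      show "isCont (\<lambda>\<tau>. v z \<tau>) t" if "t0 < t" "t \<le> s1" for z t
      proof -
        have "0 < t" "t < T" using that t0 by auto
        then show ?thesis by (rule DERIV_isCont[OF vder])
      qed
      have "1 + s1 - t0 > 0" using t0 by simp
      then have e2: "\<epsilon> * (1 + s1 - t0) = \<delta> / 2" unfolding \<epsilon>_def by (simp add: field_simps)
      have e1: "v z1 s1 = (a z1 s1 ^ 2 - m0^2 + 4 * (s1 - t0)) + \<epsilon> * (1 + s1 - t0)"
        unfolding v_def by (simp add: algebra_simps)
      have e3: "a z1 s1 ^ 2 - m0^2 + 4 * (s1 - t0) = - \<delta>" unfolding \<delta>_def by simp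
      have "\<delta> > 0" unfolding \<delta>_def by (rule dpos)
      then show "v z1 s1 \<le> 0" unfolding e1 e2 e3 by simp
    qed (use t0 in auto)
    have tsT: "ts < T" and ts0: "0 \<le> ts" and tsp: "0 < ts" using ts t0 by auto
    have amin: "a zs ts \<le> a w ts" for w
    proof -
      have "a zs ts ^ 2 \<le> a w ts ^ 2" using ts(3) ts(4)[of w] unfolding v_def by simp
      moreover have "0 \<le> a w ts" using pos[OF ts0 tsT, of w] by simp
      ultimately show ?thesis by (rule power2_le_imp_le)
    qed
    have sd: "a1 (zs,ts) = 0 \<and> 0 \<le> a2 (zs,ts)"
      using second_deriv_min[where f="\<lambda>w. a w ts" and fd="\<lambda>w. a1 (w,ts)", OF A(3)[OF ts0 tsT] A(4)[OF ts0 tsT] amin]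
      by simp
    have ne: "\<phi> zs ts \<noteq> 0" using pos[OF ts0 tsT, of zs] by simp
    note sa = sder2_eq[where f=a and t=ts and z=zs and \<phi>=\<phi> and fd="\<lambda>w. a1 (w,ts)", OF A(3)[OF ts0 tsT] A(4)[OF ts0 tsT] P(3)[OF ts0 tsT] ne]
    have tx: "tder a zs ts = aT (zs,ts)" unfolding tder_def using DERIV_imp_deriv[OF A(5)[OF tsp tsT]] by simp
    have ss: "sder \<phi> (sder \<phi> a) zs ts \<ge> 0"
    proof -
      have "sder \<phi> (sder \<phi> a) zs ts = a2 (zs,ts) * \<phi> zs ts / \<phi> zs ts ^ 3" using sa(1) sd by simp
      moreover have "0 \<le> a2 (zs,ts) * \<phi> zs ts / \<phi> zs ts ^ 3"
        using sd pos[OF ts0 tsT, of zs] by (intro divide_nonneg_nonneg mult_nonneg_nonneg) auto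
      ultimately show ?thesis by simp
    qed
    have s1: "sder \<phi> a zs ts = 0" using sa(2) sd by simp
    define R where "R = 2 * ((b zs ts ^ 2 - c zs ts ^ 2) ^ 2 - a zs ts ^ 4) / (a zs ts * b zs ts ^ 2 * c zs ts ^ 2)"
    have at_eq: "aT (zs,ts) = sder \<phi> (sder \<phi> a) zs ts + R"
    proof -
      have "tder a zs ts = sder \<phi> (sder \<phi> a) zs ts
          + sder \<phi> a zs ts * (sder \<phi> b zs ts / b zs ts + sder \<phi> c zs ts / c zs ts) + R"
        using E[of ts zs] tsp tsT unfolding R_def by auto
      then show ?thesis using tx s1 by simp
    qed
    have Rl: "R \<ge> - 2 / a zs ts" unfolding R_def
      by (rule react_low) (use pos[OF ts0 tsT, of zs] ab[OF ts0 tsT, of zs] bc[OF ts0 tsT, of zs] in auto)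
    have apos: "a zs ts > 0" using pos[OF ts0 tsT, of zs] by simp
    have "2 * a zs ts * aT (zs,ts) \<ge> 2 * a zs ts * (- 2 / a zs ts)"
    proof -
      have "aT (zs,ts) \<ge> - 2 / a zs ts" using at_eq ss Rl by linarith
      then show ?thesis using apos by (intro mult_left_mono) auto
    qed
    then have low: "2 * a zs ts * aT (zs,ts) \<ge> -4" using apos by simp
    have "2 * a zs ts * aT (zs,ts) + (4 + \<epsilon>) \<le> 0"
      by (rule deriv_nonpos_at_touch[OF vder[OF tsp tsT] ts(1) ts(3)]) (use ts(5) in auto)
    then show False using low epos by linarith
  qed
  show ?thesis
  proof
    fix t0 assume "t0 \<in> {0..<T}"
    then have t0: "0 \<le> t0" "t0 < T" by auto
    define m0 where "m0 = (INF z. a z t0)"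
    have apos0: "0 \<le> a z t0" for z using pos[OF t0, of z] by simp
    have bdd: "bdd_below (range (\<lambda>z. a z t0))"
      by (rule bdd_belowI[where m=0]) (use apos0 in blast)
    have mle: "m0 \<le> a z t0" for z unfolding m0_def by (rule cINF_lower[OF bdd]) simp
    have m0pos: "0 \<le> m0" unfolding m0_def by (rule cINF_greatest) (simp_all add: apos0)
    show "(INF z. a z t0) ^ 2 \<le> 4 * (T - t0)"
    proof (rule ccontr)
      assume "\<not> ?thesis"
      then have gt: "m0^2 - 4 * (T - t0) > 0" unfolding m0_def by simp
      define r where "r = sqrt (m0^2 - 4 * (T - t0))"
      have rpos: "r > 0" unfolding r_def using gt by simp
      have r2: "r^2 = m0^2 - 4 * (T - t0)" unfolding r_def using gt by simp
      have rle: "r \<le> (INF z. a z s)" if "t0 \<le> s" "s < T" for s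
      proof (rule cINF_greatest)
        fix z
        have "m0^2 - 4 * (s - t0) \<le> a z s ^ 2" by (rule main[OF t0(1) that m0pos mle])
        then have "r^2 \<le> a z s ^ 2" using r2 that by (smt (verit))
        moreover have "0 \<le> a z s" using pos[of s z] that t0 by simp
        ultimately show "r \<le> a z s" by (rule power2_le_imp_le)
      qed simp
      have ev1: "eventually (\<lambda>s. (INF z. a z s) < r) (at_left T)"
        using order_tendstoD(2)[OF assms(3) rpos] .
      have ev2: "eventually (\<lambda>s. s \<in> {t0<..<T}) (at_left T)"
        using eventually_at_left_real[OF t0(2)] .
      have ff: "False" if "(INF z. a z s) < r" "s \<in> {t0<..<T}" for s
      proof -
        have "t0 \<le> s" "s < T" using that(2) by auto
        from rle[OF this] that(1) show False by linarith
      qed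
      have "eventually (\<lambda>s. False) (at_left T)"
        using eventually_mono[OF eventually_conj[OF ev1 ev2]] ff by blast
      then show False using trivial_limit_at_left_real[of T] by (simp add: eventually_False)
    qed
  qed
qed

end
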